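(* Let $(H,\mathcal P)$ be a hypergraph colouring instance with pinnings, $H=(V,\mathcal E)$ with maximum degree $\Delta$, and let $k'\le k$ be integers with $k'\ge 2$ such that $k'\le|e|\le k$ for every $e\in\mathcal E$. Let $t\ge k$ and $q\ge(\mathrm e t\Delta)^{\frac{1}{k'-1}}$. Then for every $v\in V$ and every colour $c\in[q]$, $$\Pr_{\sigma\sim\mu_{\mathcal C}}[\sigma(v)=c]\le\frac1q\Big(1+\frac4t\Big).$$
   Context: A hypergraph $H=(V,\mathcal E)$ has finite vertex set $V$ and hyperedges $\mathcal E\subseteq 2^V$; its maximum degree $\Delta$ is the maximum number of hyperedges containing a single vertex. For $q\in\mathbb N$, a hypergraph colouring instance with pinnings is a pair $(H,\mathcal P)$ with $\mathcal P=\{P_e\subseteq[q]:e\in\mathcal E\}$ ($P_e$ is the set of colours already present in $e$). A colouring $\sigma\in[q]^V$ is proper if $|\{\sigma(u):u\in e\}\cup P_e|>1$ for every $e\in\mathcal E$. $\mathcal C$ is the set of proper colourings and $\mu_{\mathcal C}$ the uniform distribution on $\mathcal C$. $\mathrm e$ denotes Euler's number. *)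

theory Defs
  imports Complex_Main "HOL-Library.FuncSet"
begin

definition hypergraph :: "'a set \<Rightarrow> 'a set set \<Rightarrow> bool" where
  "hypergraph V E \<longleftrightarrow> finite V \<and> (\<forall>e\<in>E. e \<subseteq> V)"

definition vdegree :: "'a set set \<Rightarrow> 'a \<Rightarrow> nat" where
  "vdegree E v = card {e \<in> E. v \<in> e}"

definition max_degree :: "'a set \<Rightarrow> 'a set set \<Rightarrow> nat" where
  "max_degree V E = (if V = {} then 0 else Max (vdegree E ` V))"

text \<open>Colourings are functions V \<rightarrow> [q], extensional (undefined outside V).
  Pinnings: P e is the set of colours already present in hyperedge e.\<close>

definition proper_colourings ::
  "nat \<Rightarrow> 'a set \<Rightarrow> 'a set set \<Rightarrow> ('a set \<Rightarrow> nat set) \<Rightarrow> ('a \<Rightarrow> nat) set" where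
  "proper_colourings q V E P =
     {\<sigma> \<in> V \<rightarrow>\<^sub>E {1..q}. \<forall>e\<in>E. card (\<sigma> ` e \<union> P e) > 1}"

definition prob_colour ::
  "nat \<Rightarrow> 'a set \<Rightarrow> 'a set set \<Rightarrow> ('a set \<Rightarrow> nat set) \<Rightarrow> 'a \<Rightarrow> nat \<Rightarrow> real" where
  "prob_colour q V E P v c =
     real (card {\<sigma> \<in> proper_colourings q V E P. \<sigma> v = c})
       / real (card (proper_colourings q V E P))"

end

theory Submission
  imports Defs
begin

lemma indep:
  assumes W: "W \<subseteq> V"
  and hA: "\<And>\<sigma> \<tau>. (\<forall>x\<in>W. \<sigma> x = \<tau> x) \<Longrightarrow> A \<sigma> = A \<tau>"
  and hG: "\<And>\<sigma> \<tau>. (\<forall>x\<in>V-W. \<sigma> x = \<tau> x) \<Longrightarrow> G \<sigma> = G \<tau>"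
  shows "card {\<sigma> \<in> V \<rightarrow>\<^sub>E Q. A \<sigma> \<and> G \<sigma>} = card {a \<in> W \<rightarrow>\<^sub>E Q. A a} * card {b \<in> (V-W) \<rightarrow>\<^sub>E Q. G b}"
proof -
  define X where "X = {\<sigma> \<in> V \<rightarrow>\<^sub>E Q. A \<sigma> \<and> G \<sigma>}"
  define f where "f = (\<lambda>\<sigma>::'a \<Rightarrow> 'b. (restrict \<sigma> W, restrict \<sigma> (V-W)))"
  have inj: "inj_on f X"
  proof (rule inj_onI)
    fix \<sigma> \<tau> assume s: "\<sigma> \<in> X" and t: "\<tau> \<in> X" and e: "f \<sigma> = f \<tau>"
    have sP: "\<sigma> \<in> V \<rightarrow>\<^sub>E Q" using s by (simp add: X_def)
    have tP: "\<tau> \<in> V \<rightarrow>\<^sub>E Q" using t by (simp add: X_def)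
    have e1: "restrict \<sigma> W = restrict \<tau> W" and e2: "restrict \<sigma> (V-W) = restrict \<tau> (V-W)"
      using e by (simp_all add: f_def)
    show "\<sigma> = \<tau>"
    proof (rule ext)
      fix x
      show "\<sigma> x = \<tau> x"
      proof (cases "x \<in> V")
        case True
        show ?thesis
        proof (cases "x \<in> W")
          case True
          then show ?thesis using fun_cong[OF e1, of x] by simp
        next
          case False
          then show ?thesis using fun_cong[OF e2, of x] \<open>x \<in> V\<close> by simp
        qed
      next
        case False
        then show ?thesis using PiE_arb[OF sP False] PiE_arb[OF tP False] by simp
      qed
    qed
  qed
  have img: "f ` X = {a \<in> W \<rightarrow>\<^sub>E Q. A a} \<times> {b \<in> (V-W) \<rightarrow>\<^sub>E Q. G b}"
  proof (rule equalityI)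
    show "f ` X \<subseteq> {a \<in> W \<rightarrow>\<^sub>E Q. A a} \<times> {b \<in> (V-W) \<rightarrow>\<^sub>E Q. G b}"
    proof (rule image_subsetI)
      fix \<sigma> assume s0: "\<sigma> \<in> X"
      have s: "\<sigma> \<in> V \<rightarrow>\<^sub>E Q" "A \<sigma>" "G \<sigma>" using s0 by (simp_all add: X_def)
      have r1: "A (restrict \<sigma> W) = A \<sigma>" by (rule hA) simp
      have r2: "G (restrict \<sigma> (V-W)) = G \<sigma>" by (rule hG) simp
      have r3: "restrict \<sigma> W \<in> W \<rightarrow>\<^sub>E Q"
        unfolding restrict_PiE_iff using W PiE_mem[OF s(1)] by blast
      have r4: "restrict \<sigma> (V-W) \<in> (V-W) \<rightarrow>\<^sub>E Q"
        unfolding restrict_PiE_iff using PiE_mem[OF s(1)] by blast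
      show "f \<sigma> \<in> {a \<in> W \<rightarrow>\<^sub>E Q. A a} \<times> {b \<in> (V-W) \<rightarrow>\<^sub>E Q. G b}"
        using r1 r2 r3 r4 s by (simp add: f_def)
    qed
  next
    show "{a \<in> W \<rightarrow>\<^sub>E Q. A a} \<times> {b \<in> (V-W) \<rightarrow>\<^sub>E Q. G b} \<subseteq> f ` X"
    proof (rule subsetI)
      fix p assume p: "p \<in> {a \<in> W \<rightarrow>\<^sub>E Q. A a} \<times> {b \<in> (V-W) \<rightarrow>\<^sub>E Q. G b}"
      obtain a b where pab: "p = (a, b)" by (cases p)
      have a: "a \<in> W \<rightarrow>\<^sub>E Q" "A a" and b: "b \<in> (V-W) \<rightarrow>\<^sub>E Q" "G b" using p pab by simp_all
      define \<sigma> where "\<sigma> = (\<lambda>x. if x \<in> W then a x else b x)"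
      have 1: "restrict \<sigma> W = a"
      proof (rule ext)
        fix y show "restrict \<sigma> W y = a y"
          by (cases "y \<in> W") (simp_all add: \<sigma>_def PiE_arb[OF a(1)])
      qed
      have 2: "restrict \<sigma> (V-W) = b"
      proof (rule ext)
        fix y show "restrict \<sigma> (V-W) y = b y"
        proof (cases "y \<in> V - W")
          case True
          then show ?thesis by (simp add: \<sigma>_def)
        next
          case False
          then have "b y = undefined" by (rule PiE_arb[OF b(1)])
          with False show ?thesis by auto
        qed
      qed
      have 31: "\<forall>i\<in>V. \<sigma> i \<in> Q"
      proof
        fix i assume "i \<in> V"
        then show "\<sigma> i \<in> Q"
          by (cases "i \<in> W") (simp_all add: \<sigma>_def PiE_mem[OF a(1)] PiE_mem[OF b(1)])
      qed
      have 32: "\<sigma> \<in> extensional V" unfolding extensional_def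
      proof (intro CollectI allI impI)
        fix x assume x: "x \<notin> V"
        then have "x \<notin> W" "x \<notin> V - W" using W by auto
        then show "\<sigma> x = undefined" by (simp add: \<sigma>_def PiE_arb[OF b(1)])
      qed
      have 3: "\<sigma> \<in> V \<rightarrow>\<^sub>E Q" using 31 32 by (simp add: PiE_iff)
      have "A \<sigma> = A a" by (rule hA) (simp add: \<sigma>_def)
      moreover have "G \<sigma> = G b" by (rule hG) (simp add: \<sigma>_def)
      ultimately have sX: "\<sigma> \<in> X" using a b 3 by (simp add: X_def)
      have "p = f \<sigma>" using 1 2 pab by (simp add: f_def)
      then show "p \<in> f ` X" using sX by (rule image_eqI)
    qed
  qed
  have "card X = card (f ` X)" using inj by (simp add: card_image)
  then show ?thesis using img by (simp add: card_cartesian_product X_def)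
qed

definition goodset :: "nat \<Rightarrow> 'a set \<Rightarrow> ('a set \<Rightarrow> nat set) \<Rightarrow> 'a set set \<Rightarrow> ('a \<Rightarrow> nat) set" where
  "goodset q V P S = {\<sigma> \<in> V \<rightarrow>\<^sub>E {1..q}. \<forall>f\<in>S. 1 < card (\<sigma> ` f \<union> P f)}"

definition badset where
  "badset q V P S e = {\<sigma> \<in> goodset q V P S. \<not> 1 < card (\<sigma> ` e \<union> P e)}"

lemma goodset_finite: "finite V \<Longrightarrow> finite (goodset q V P S)"
  unfolding goodset_def by (rule finite_subset[of _ "V \<rightarrow>\<^sub>E {1..q}"]) (auto intro: finite_PiE)

lemma goodset_insert:
  assumes "finite V"
  shows "real (card (goodset q V P (insert f S))) = real (card (goodset q V P S)) - real (card (badset q V P S f))"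
proof -
  have u: "goodset q V P S = goodset q V P (insert f S) \<union> badset q V P S f"
    and d: "goodset q V P (insert f S) \<inter> badset q V P S f = {}"
    unfolding goodset_def badset_def by auto
  have fin: "finite (goodset q V P S)" using goodset_finite[OF assms] .
  have f1: "finite (goodset q V P (insert f S))"
    by (rule finite_subset[OF _ fin]) (unfold goodset_def, blast)
  have f2: "finite (badset q V P S f)"
    by (rule finite_subset[OF _ fin]) (unfold badset_def, blast)
  have "card (goodset q V P S) = card (goodset q V P (insert f S) \<union> badset q V P S f)"
    using u by (rule arg_cong)
  also have "\<dots> = card (goodset q V P (insert f S)) + card (badset q V P S f)"
    by (rule card_Un_disjoint[OF f1 f2 d])
  finally have "card (goodset q V P S) = card (goodset q V P (insert f S)) + card (badset q V P S f)" .
  then show ?thesis by simp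
qed

lemma goodset_mono: "S \<subseteq> T \<Longrightarrow> goodset q V P T \<subseteq> goodset q V P S"
  unfolding goodset_def by auto

lemma badset_mono: "S \<subseteq> T \<Longrightarrow> badset q V P T e \<subseteq> badset q V P S e"
  unfolding badset_def goodset_def by auto

lemma chain:
  assumes finV: "finite V" and finS: "finite S"
    and IH: "\<And>S' f. S' \<subseteq> S \<Longrightarrow> f \<in> S \<Longrightarrow> f \<notin> S' \<Longrightarrow>
       real (card (badset q V P S' f)) \<le> x * real (card (goodset q V P S'))"
    and x: "x \<le> 1" and T: "T \<subseteq> S"
  shows "(1-x)^card (S-T) * real (card (goodset q V P T)) \<le> real (card (goodset q V P S))"
proof -
  have "D \<subseteq> S - T \<Longrightarrow> (1-x)^card D * real (card (goodset q V P T)) \<le> real (card (goodset q V P (T \<union> D)))"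
    if "finite D" for D
    using that
  proof (induction D rule: finite_induct)
    case empty
    then show ?case by simp
  next
    case (insert f D)
    have fD: "f \<notin> T \<union> D" "f \<in> S" "T \<union> D \<subseteq> S" using insert T by auto
    have "(1-x)^card (insert f D) * real (card (goodset q V P T)) = (1-x) * ((1-x)^card D * real (card (goodset q V P T)))"
      using insert by simp
    also have "\<dots> \<le> (1-x) * real (card (goodset q V P (T \<union> D)))"
    proof -
      have IHD: "(1-x)^card D * real (card (goodset q V P T)) \<le> real (card (goodset q V P (T \<union> D)))"
        using insert.IH insert.prems by blast
      show ?thesis using IHD x by (intro mult_left_mono) simp_all
    qed
    also have "\<dots> \<le> real (card (goodset q V P (T \<union> D))) - real (card (badset q V P (T \<union> D) f))"
      using IH[OF fD(3) fD(2) fD(1)] by (simp add: algebra_simps)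
    also have "\<dots> = real (card (goodset q V P (T \<union> insert f D)))"
      using goodset_insert[OF finV, of q P f "T \<union> D"] by simp
    finally show ?case .
  qed
  from this[of "S - T"] finS T show ?thesis by (simp add: Un_absorb1)
qed


lemma bad_count:
  assumes finV: "finite V" and eV: "e \<subseteq> V" and ne: "e \<noteq> {}" and finP: "finite (P e)"
    and q: "1 \<le> q"
    and hS: "\<forall>f\<in>S. f \<subseteq> V \<and> f \<inter> e = {}"
  shows "real (card (badset q V P S e)) * real q ^ (card e - 1) \<le> real (card (goodset q V P S))"
proof -
  define Q where "Q = {1..q}"
  define A where "A = (\<lambda>\<sigma>::'a\<Rightarrow>nat. \<not> 1 < card (\<sigma> ` e \<union> P e))"
  define G where "G = (\<lambda>\<sigma>::'a\<Rightarrow>nat. \<forall>f\<in>S. 1 < card (\<sigma> ` f \<union> P f))"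
  have b: "badset q V P S e = {\<sigma> \<in> V \<rightarrow>\<^sub>E Q. A \<sigma> \<and> G \<sigma>}"
    unfolding badset_def goodset_def A_def G_def Q_def by auto
  have g: "goodset q V P S = {\<sigma> \<in> V \<rightarrow>\<^sub>E Q. (\<lambda>_. True) \<sigma> \<and> G \<sigma>}"
    unfolding goodset_def G_def Q_def by auto
  have hA: "A \<sigma> = A \<tau>" if "\<forall>x\<in>e. \<sigma> x = \<tau> x" for \<sigma> \<tau>
  proof -
    have "\<sigma> ` e = \<tau> ` e" using that by (auto intro: image_cong)
    then show ?thesis unfolding A_def by simp
  qed
  have hG: "G \<sigma> = G \<tau>" if "\<forall>x\<in>V-e. \<sigma> x = \<tau> x" for \<sigma> \<tau>
  proof -
    have "\<sigma> ` f = \<tau> ` f" if "f \<in> S" for f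
    proof (rule image_cong)
      fix x assume "x \<in> f"
      then have "x \<in> V - e" using hS \<open>f \<in> S\<close> by blast
      then show "\<sigma> x = \<tau> x" using \<open>\<forall>x\<in>V-e. \<sigma> x = \<tau> x\<close> by blast
    qed simp
    then show ?thesis unfolding G_def by simp
  qed
  have cb: "card (badset q V P S e) = card {a \<in> e \<rightarrow>\<^sub>E Q. A a} * card {b \<in> (V-e) \<rightarrow>\<^sub>E Q. G b}"
    unfolding b by (rule indep[OF eV hA hG])
  have cg0: "card (goodset q V P S) = card {a \<in> e \<rightarrow>\<^sub>E Q. True} * card {b \<in> (V-e) \<rightarrow>\<^sub>E Q. G b}"
    unfolding g by (rule indep[OF eV _ hG]) simp
  have fine: "finite e" using finV eV finite_subset by blast
  have "card {a \<in> e \<rightarrow>\<^sub>E Q. True} = q ^ card e"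
    using card_PiE[OF fine, of "\<lambda>_. Q"] fine by (simp add: Q_def)
  then have cg: "card (goodset q V P S) = q ^ card e * card {b \<in> (V-e) \<rightarrow>\<^sub>E Q. G b}"
    using cg0 by simp
  obtain x0 where x0: "x0 \<in> e" using ne by blast
  have inj: "inj_on (\<lambda>a. a x0) {a \<in> e \<rightarrow>\<^sub>E Q. A a}"
  proof (rule inj_onI)
    fix a b assume a: "a \<in> {a \<in> e \<rightarrow>\<^sub>E Q. A a}" and b: "b \<in> {a \<in> e \<rightarrow>\<^sub>E Q. A a}"
      and ab: "a x0 = b x0"
    have const: "h y = h x0" if "h \<in> {a \<in> e \<rightarrow>\<^sub>E Q. A a}" "y \<in> e" for h y
    proof -
      have fin: "finite (h ` e \<union> P e)" using fine finP by simp
      have "card (h ` e \<union> P e) \<le> Suc 0" using that(1) unfolding A_def by simp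
      then have "\<forall>a1 \<in> h ` e \<union> P e. \<forall>a2 \<in> h ` e \<union> P e. a1 = a2"
        using card_le_Suc0_iff_eq[OF fin] by blast
      then show ?thesis using that(2) x0 by blast
    qed
    show "a = b"
    proof
      fix y show "a y = b y"
      proof (cases "y \<in> e")
        case True
        then show ?thesis using const[OF a True] const[OF b True] ab by simp
      next
        case False
        have aP: "a \<in> e \<rightarrow>\<^sub>E Q" and bP: "b \<in> e \<rightarrow>\<^sub>E Q" using a b by simp_all
        show ?thesis using PiE_arb[OF aP False] PiE_arb[OF bP False] by simp
      qed
    qed
  qed
  have "(\<lambda>a. a x0) ` {a \<in> e \<rightarrow>\<^sub>E Q. A a} \<subseteq> Q" using x0 by auto
  then have "card {a \<in> e \<rightarrow>\<^sub>E Q. A a} \<le> card Q"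
    by (rule card_inj_on_le[OF inj]) (simp add: Q_def)
  then have cA: "card {a \<in> e \<rightarrow>\<^sub>E Q. A a} \<le> q" by (simp add: Q_def)
  have pe: "q * q ^ (card e - 1) = q ^ card e"
  proof -
    have "card e \<noteq> 0" using fine ne by simp
    then obtain n where "card e = Suc n" using not0_implies_Suc by blast
    then show ?thesis by simp
  qed
  have "card (badset q V P S e) * q ^ (card e - 1) \<le> q * card {b \<in> (V-e) \<rightarrow>\<^sub>E Q. G b} * q ^ (card e - 1)"
    unfolding cb by (intro mult_right_mono cA) simp_all
  also have "\<dots> = card (goodset q V P S)" unfolding cg pe[symmetric] by simp
  finally have "card (badset q V P S e) * q ^ (card e - 1) \<le> card (goodset q V P S)" .
  then have "real (card (badset q V P S e) * q ^ (card e - 1)) \<le> real (card (goodset q V P S))"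
    by (simp only: of_nat_le_iff)
  then show ?thesis by simp
qed

lemma point_count:
  assumes v: "v \<in> V" and c: "c \<in> {1..q}"
    and hS: "\<forall>f\<in>S. f \<subseteq> V \<and> v \<notin> f"
  shows "card {\<sigma> \<in> goodset q V P S. \<sigma> v = c} * q = card (goodset q V P S)"
proof -
  define Q where "Q = {1..q}"
  define G where "G = (\<lambda>\<sigma>::'a\<Rightarrow>nat. \<forall>f\<in>S. 1 < card (\<sigma> ` f \<union> P f))"
  have W: "{v} \<subseteq> V" using v by simp
  have hG: "G \<sigma> = G \<tau>" if "\<forall>x\<in>V-{v}. \<sigma> x = \<tau> x" for \<sigma> \<tau>
  proof -
    have "\<sigma> ` f = \<tau> ` f" if "f \<in> S" for f
    proof (rule image_cong)
      fix x assume "x \<in> f"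
      then have "x \<in> V - {v}" using hS \<open>f \<in> S\<close> by blast
      then show "\<sigma> x = \<tau> x" using \<open>\<forall>x\<in>V-{v}. \<sigma> x = \<tau> x\<close> by blast
    qed simp
    then show ?thesis unfolding G_def by simp
  qed
  have b: "{\<sigma> \<in> goodset q V P S. \<sigma> v = c} = {\<sigma> \<in> V \<rightarrow>\<^sub>E Q. (\<lambda>\<sigma>. \<sigma> v = c) \<sigma> \<and> G \<sigma>}"
    unfolding goodset_def G_def Q_def by auto
  have g: "goodset q V P S = {\<sigma> \<in> V \<rightarrow>\<^sub>E Q. (\<lambda>_. True) \<sigma> \<and> G \<sigma>}"
    unfolding goodset_def G_def Q_def by auto
  have c1: "card {\<sigma> \<in> goodset q V P S. \<sigma> v = c} = card {a \<in> {v} \<rightarrow>\<^sub>E Q. a v = c} * card {b \<in> (V-{v}) \<rightarrow>\<^sub>E Q. G b}"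
    unfolding b by (rule indep[OF W _ hG]) simp
  have c2: "card (goodset q V P S) = card {a \<in> {v} \<rightarrow>\<^sub>E Q. True} * card {b \<in> (V-{v}) \<rightarrow>\<^sub>E Q. G b}"
    unfolding g by (rule indep[OF W _ hG]) simp
  have "{a \<in> {v} \<rightarrow>\<^sub>E Q. a v = c} = {restrict (\<lambda>_. c) {v}}"
  proof (intro equalityI subsetI)
    fix a assume a: "a \<in> {a \<in> {v} \<rightarrow>\<^sub>E Q. a v = c}"
    have "a = restrict (\<lambda>_. c) {v}"
    proof
      fix y show "a y = restrict (\<lambda>_. c) {v} y"
      proof (cases "y = v")
        case True
        then show ?thesis using a by simp
      next
        case False
        have aP: "a \<in> {v} \<rightarrow>\<^sub>E Q" using a by simp
        have "y \<notin> {v}" using False by simp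
        then show ?thesis using PiE_arb[OF aP] by simp
      qed
    qed
    then show "a \<in> {restrict (\<lambda>_. c) {v}}" by simp
  next
    fix a assume "a \<in> {restrict (\<lambda>_. c) {v}}"
    then show "a \<in> {a \<in> {v} \<rightarrow>\<^sub>E Q. a v = c}" using c by (auto simp: Q_def)
  qed
  then have c3: "card {a \<in> {v} \<rightarrow>\<^sub>E Q. a v = c} = 1" by simp
  have c4: "card {a \<in> {v} \<rightarrow>\<^sub>E Q. True} = q"
    using card_PiE[of "{v}" "\<lambda>_. Q"] by (simp add: Q_def)
  show ?thesis using c1 c2 c3 c4 by simp
qed

lemma nb_card:
  assumes finE: "finite E" and e: "e \<in> E" and fine: "finite e"
    and deg: "\<forall>u\<in>e. vdegree E u \<le> D"
  shows "card {f \<in> E. f \<noteq> e \<and> f \<inter> e \<noteq> {}} \<le> card e * (D - 1)"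
proof -
  have sub: "{f \<in> E. f \<noteq> e \<and> f \<inter> e \<noteq> {}} \<subseteq> (\<Union>u\<in>e. {f \<in> E. u \<in> f} - {e})" by blast
  have "card {f \<in> E. f \<noteq> e \<and> f \<inter> e \<noteq> {}} \<le> card (\<Union>u\<in>e. {f \<in> E. u \<in> f} - {e})"
    by (rule card_mono[OF _ sub]) (use fine finE in auto)
  also have "\<dots> \<le> (\<Sum>u\<in>e. card ({f \<in> E. u \<in> f} - {e}))" by (rule card_UN_le[OF fine])
  also have "\<dots> \<le> (\<Sum>u\<in>e. D - 1)"
  proof (rule sum_mono)
    fix u assume u: "u \<in> e"
    have "card ({f \<in> E. u \<in> f} - {e}) = card {f \<in> E. u \<in> f} - 1"
      using u e finE by (subst card_Diff_singleton) auto
    also have "\<dots> \<le> D - 1" using deg u unfolding vdegree_def by (intro diff_le_mono) auto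
    finally show "card ({f \<in> E. u \<in> f} - {e}) \<le> D - 1" .
  qed
  also have "\<dots> = card e * (D - 1)" by simp
  finally show ?thesis .
qed

lemma lll:
  assumes finV: "finite V" and finE: "finite E"
    and hE: "\<forall>e\<in>E. e \<subseteq> V \<and> e \<noteq> {} \<and> finite (P e)" and q: "1 \<le> q"
    and x0: "0 \<le> x" and x1: "x \<le> 1"
    and key: "\<forall>e\<in>E. 1 \<le> real q ^ (card e - 1) * x * (1-x) ^ card {f \<in> E. f \<noteq> e \<and> f \<inter> e \<noteq> {}}"
  shows "S \<subseteq> E \<Longrightarrow> e \<in> E \<Longrightarrow> e \<notin> S \<Longrightarrow>
    real (card (badset q V P S e)) \<le> x * real (card (goodset q V P S))"
proof (induction "card S" arbitrary: S e rule: less_induct)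
  case less
  define S2 where "S2 = {f \<in> S. f \<inter> e = {}}"
  define Nb where "Nb = {f \<in> E. f \<noteq> e \<and> f \<inter> e \<noteq> {}}"
  have S2S: "S2 \<subseteq> S" unfolding S2_def by blast
  have fS: "finite S" using finite_subset[OF less.prems(1) finE] .
  have ch: "(1-x)^card (S-S2) * real (card (goodset q V P S2)) \<le> real (card (goodset q V P S))"
  proof (rule chain[OF finV fS _ x1 S2S])
    fix S' f assume "S' \<subseteq> S" "f \<in> S" "f \<notin> S'"
    then have "S' \<subset> S" by blast
    then have "card S' < card S" by (rule psubset_card_mono[OF fS])
    then show "real (card (badset q V P S' f)) \<le> x * real (card (goodset q V P S'))"
      using less.hyps \<open>S' \<subseteq> S\<close> \<open>f \<in> S\<close> \<open>f \<notin> S'\<close> less.prems(1) by blast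
  qed
  have finb2: "finite (badset q V P S2 e)"
    using goodset_finite[OF finV, of q P S2] unfolding badset_def by simp
  have bd: "real (card (badset q V P S e)) \<le> real (card (badset q V P S2 e))"
    using card_mono[OF finb2 badset_mono[OF S2S]] by simp
  have eE: "e \<subseteq> V" "e \<noteq> {}" "finite (P e)" using hE less.prems(2) by auto
  have bc: "real (card (badset q V P S2 e)) * real q ^ (card e - 1) \<le> real (card (goodset q V P S2))"
    by (rule bad_count[of V e P q S2, OF finV eE q]) (use hE less.prems(1) in \<open>auto simp: S2_def\<close>)
  have sub: "S - S2 \<subseteq> Nb" using less.prems unfolding S2_def Nb_def by blast
  have "card (S - S2) \<le> card Nb" by (rule card_mono[OF _ sub]) (use finE in \<open>simp add: Nb_def\<close>)
  then have pw: "(1-x)^card Nb \<le> (1-x)^card (S - S2)"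
    by (rule power_decreasing) (use x0 x1 in auto)
  have k: "1 \<le> real q ^ (card e - 1) * x * (1-x) ^ card Nb"
    using key less.prems(2) unfolding Nb_def by blast
  define B2 where "B2 = real (card (badset q V P S2 e))"
  define g2 where "g2 = real (card (goodset q V P S2))"
  define Q1 where "Q1 = real q ^ (card e - 1)"
  define y where "y = (1-x)^card Nb"
  have B2: "0 \<le> B2" "0 \<le> g2" "0 \<le> y" using x1 by (auto simp: B2_def g2_def y_def)
  have "real (card (badset q V P S e)) \<le> B2" using bd by (simp add: B2_def)
  also have "\<dots> \<le> B2 * (Q1 * x * y)"
    using k B2 by (simp add: Q1_def y_def) (metis mult_left_mono mult.right_neutral)
  also have "\<dots> = (B2 * Q1) * (x * y)" by (simp add: algebra_simps)
  also have "\<dots> \<le> g2 * (x * y)"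
    using bc B2 x0 by (intro mult_right_mono) (auto simp: B2_def Q1_def g2_def)
  also have "\<dots> = x * (y * g2)" by (simp add: algebra_simps)
  also have "\<dots> \<le> x * ((1-x)^card (S - S2) * g2)"
    using pw B2 x0 by (intro mult_left_mono mult_right_mono) (auto simp: y_def)
  also have "\<dots> \<le> x * real (card (goodset q V P S))"
    using ch x0 by (intro mult_left_mono) (auto simp: g2_def)
  finally show ?case .
qed

lemma num_exp:
  fixes N :: real
  assumes N: "2 \<le> N" and m: "real m \<le> N - 1"
  shows "exp (-1) \<le> (1 - 1/N) ^ m"
proof -
  define a where "a = 1 - 1/N"
  have apos: "0 < a" using N by (simp add: a_def field_simps)
  have ale: "a \<le> 1" using N by (simp add: a_def)
  have lna: "ln a \<le> 0" using apos ale by simp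
  have "1 + 1/(N-1) = inverse a" using N by (simp add: a_def field_simps)
  then have "ln (inverse a) \<le> 1/(N-1)" using N ln_add_one_self_le_self[of "1/(N-1)"] by simp
  then have "- ln a \<le> 1/(N-1)" by (simp add: ln_inverse)
  then have "(N-1) * (- ln a) \<le> 1" using N by (simp add: le_divide_eq mult.commute)
  then have h1: "-1 \<le> (N-1) * ln a" by simp
  have "(N-1) * ln a \<le> real m * ln a" using m lna by (rule mult_right_mono_neg)
  then have "-1 \<le> real m * ln a" using h1 by simp
  then have "exp (-1) \<le> exp (real m * ln a)" by simp
  also have "exp (real m * ln a) = a ^ m"
    using apos by (simp add: powr_realpow[symmetric] powr_def)
  finally show ?thesis by (simp add: a_def)
qed

theorem lemma2p3:
  fixes V :: "'a set" and E :: "'a set set" and P :: "'a set \<Rightarrow> nat set"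
    and q k k' :: nat and t :: real and v :: 'a and c :: nat
  assumes "hypergraph V E"
    and "\<forall>e\<in>E. P e \<subseteq> {1..q}"
    and "k' \<le> k" and "2 \<le> k'"
    and "\<forall>e\<in>E. k' \<le> card e \<and> card e \<le> k"
    and "real k \<le> t"
    and "real q \<ge> (exp 1 * t * real (max_degree V E)) powr (1 / (real k' - 1))"
    and "v \<in> V" and "c \<in> {1..q}"
  shows "prob_colour q V E P v c \<le> (1 / real q) * (1 + 4 / t)"
proof -
  have hyp: "finite V" "\<forall>e\<in>E. e \<subseteq> V" using assms(1) unfolding hypergraph_def by auto
  have finV: "finite V" using hyp by simp
  have finE: "finite E"
    by (rule finite_subset[of E "Pow V"]) (use hyp in auto)
  have q1: "1 \<le> q" using assms(9) by simp
  have t2: "2 \<le> t" using assms(3,4,6) by linarith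
  have tpos: "0 < t" using t2 by simp
  have Pfin: "\<forall>e\<in>E. finite (P e)" using assms(2) finite_subset by blast
  have card2: "\<forall>e\<in>E. 2 \<le> card e" using assms(4,5) by force
  have ne: "\<forall>e\<in>E. e \<noteq> {}" using card2 by force
  define D where "D = max_degree V E"
  have degle: "vdegree E u \<le> D" if "u \<in> V" for u
  proof -
    have "V \<noteq> {}" using assms(8) by blast
    then show ?thesis unfolding D_def max_degree_def using finV that by simp
  qed
  define E2 where "E2 = {f \<in> E. v \<notin> f}"
  define g where "g = (\<lambda>S. real (card (goodset q V P S)))"
  have hprop: "proper_colourings q V E P = goodset q V P E"
    by (simp add: proper_colourings_def goodset_def)
  define num where "num = real (card {\<sigma> \<in> goodset q V P E. \<sigma> v = c})"
  have E2E: "E2 \<subseteq> E" unfolding E2_def by blast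
  have finG2: "finite {\<sigma> \<in> goodset q V P E2. \<sigma> v = c}"
    using goodset_finite[OF finV, of q P E2] by simp
  have le1: "card {\<sigma> \<in> goodset q V P E. \<sigma> v = c} \<le> card {\<sigma> \<in> goodset q V P E2. \<sigma> v = c}"
    by (rule card_mono[OF finG2]) (use goodset_mono[OF E2E] in blast)
  have pc: "card {\<sigma> \<in> goodset q V P E2. \<sigma> v = c} * q = card (goodset q V P E2)"
    by (rule point_count[OF assms(8) assms(9)]) (use hyp in \<open>auto simp: E2_def\<close>)
  have "card {\<sigma> \<in> goodset q V P E. \<sigma> v = c} * q \<le> card {\<sigma> \<in> goodset q V P E2. \<sigma> v = c} * q"
    using le1 by (rule mult_le_mono1)
  then have "card {\<sigma> \<in> goodset q V P E. \<sigma> v = c} * q \<le> card (goodset q V P E2)"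
    using pc by simp
  then have "real (card {\<sigma> \<in> goodset q V P E. \<sigma> v = c} * q) \<le> real (card (goodset q V P E2))"
    by (simp only: of_nat_le_iff)
  then have numle: "num * real q \<le> g E2" by (simp add: num_def g_def)
  have claim: "(1 - 1/t) * g E2 \<le> g E"
  proof (cases "D = 0")
    case True
    have "E = {}"
    proof (rule ccontr)
      assume "E \<noteq> {}"
      then obtain e where e: "e \<in> E" by blast
      then obtain u where u: "u \<in> e" using ne by blast
      have uV: "u \<in> V" using u e hyp by blast
      have "0 < vdegree E u" unfolding vdegree_def using e u finE by (subst card_gt_0_iff) auto
      then show False using degle[OF uV] True by simp
    qed
    then have "E2 = E" unfolding E2_def by simp
    have "0 \<le> g E / t" using tpos by (simp add: g_def)
    moreover have "(1 - 1/t) * g E = g E - g E / t" by (simp add: left_diff_distrib)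
    ultimately show ?thesis using \<open>E2 = E\<close> by simp
  next
    case False
    then have D1: "1 \<le> D" by simp
    define N where "N = t * real D"
    define x where "x = 1 / N"
    have "t * 1 \<le> t * real D" using D1 tpos by (intro mult_left_mono) simp_all
    then have N2: "2 \<le> N" using t2 unfolding N_def by linarith
    have x0: "0 \<le> x" and x1: "x \<le> 1" using N2 by (auto simp: x_def)
    have eN: "exp 1 * N \<le> real q ^ (k' - 1)"
    proof -
      have pos: "0 < exp 1 * N" using N2 by simp
      have r: "real (k' - 1) = real k' - 1" using assms(4) by simp
      have "(exp 1 * N) powr (1 / (real k' - 1)) \<le> real q" using assms(7) unfolding N_def D_def by (simp add: mult.assoc)
      then have "((exp 1 * N) powr (1 / (real k' - 1))) ^ (k' - 1) \<le> real q ^ (k' - 1)"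
        by (rule power_mono) simp
      also have "((exp 1 * N) powr (1 / (real k' - 1))) ^ (k' - 1) = (exp 1 * N) powr ((1 / (real k' - 1)) * real (k' - 1))"
      proof -
        have bpos: "0 < (exp 1 * N) powr (1 / (real k' - 1))" using pos N2 by simp
        have "((exp 1 * N) powr (1 / (real k' - 1))) ^ (k' - 1) = ((exp 1 * N) powr (1 / (real k' - 1))) powr real (k' - 1)"
          by (rule powr_realpow[symmetric, OF bpos])
        also have "\<dots> = (exp 1 * N) powr ((1 / (real k' - 1)) * real (k' - 1))" by (rule powr_powr)
        finally show ?thesis .
      qed
      also have "(1 / (real k' - 1)) * real (k' - 1) = 1" using r assms(4) by simp
      finally show ?thesis using pos by simp
    qed
    have key: "\<forall>e\<in>E. 1 \<le> real q ^ (card e - 1) * x * (1-x) ^ card {f \<in> E. f \<noteq> e \<and> f \<inter> e \<noteq> {}}"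
    proof
      fix e assume e: "e \<in> E"
      define m where "m = card {f \<in> E. f \<noteq> e \<and> f \<inter> e \<noteq> {}}"
      have fine: "finite e" using e hyp finV finite_subset by blast
      have "m \<le> card e * (D - 1)" unfolding m_def
        by (rule nb_card[OF finE e fine]) (use e hyp degle in blast)
      also have "\<dots> \<le> k * (D - 1)" using assms(5) e by simp
      finally have "m \<le> k * (D - 1)" .
      then have "real m \<le> real (k * (D - 1))" by (simp only: of_nat_le_iff)
      also have "\<dots> = real k * (real D - 1)" using D1 by (simp add: of_nat_diff)
      finally have "real m \<le> real k * (real D - 1)" .
      also have "\<dots> \<le> t * (real D - 1)" using assms(6) D1 by (intro mult_right_mono) auto
      also have "\<dots> \<le> N - 1" using t2 by (simp add: N_def algebra_simps)
      finally have m: "real m \<le> N - 1" .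
      have ex: "exp (-1) \<le> (1 - x) ^ m" using num_exp[OF N2 m] by (simp add: x_def)
      have qq: "real q ^ (k' - 1) \<le> real q ^ (card e - 1)"
        using q1 assms(5) e by (intro power_increasing) auto
      have "1 = (exp 1 * N) * x * exp (-1)" using N2 by (simp add: x_def exp_minus field_simps)
      also have "\<dots> \<le> real q ^ (card e - 1) * x * (1 - x) ^ m"
        using eN qq ex x0 N2 by (intro mult_mono) auto
      finally show "1 \<le> real q ^ (card e - 1) * x * (1-x) ^ card {f \<in> E. f \<noteq> e \<and> f \<inter> e \<noteq> {}}"
        by (simp add: m_def)
    qed
    have hE: "\<forall>e\<in>E. e \<subseteq> V \<and> e \<noteq> {} \<and> finite (P e)" using hyp ne Pfin by blast
    have ch: "(1-x)^card (E-E2) * g E2 \<le> g E" unfolding g_def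
      by (rule chain[OF finV finE _ x1 E2E]) (rule lll[OF finV finE hE q1 x0 x1 key]; assumption)
    have "card (E - E2) = vdegree E v" unfolding vdegree_def E2_def
      by (rule arg_cong[where f=card]) blast
    then have cd: "card (E - E2) \<le> D" using degle[OF assms(8)] by simp
    have "1 - 1/t = 1 + real D * (- x)" using D1 tpos by (simp add: x_def N_def field_simps)
    also have "\<dots> \<le> (1 + (- x)) ^ D" by (rule Bernoulli_inequality) (use x1 in simp)
    also have "\<dots> \<le> (1 - x) ^ card (E - E2)" using cd x0 x1 by (simp add: power_decreasing)
    finally have "(1 - 1/t) * g E2 \<le> (1-x)^card (E-E2) * g E2"
      by (intro mult_right_mono) (auto simp: g_def)
    then show ?thesis using ch by simp
  qed
  have pr: "prob_colour q V E P v c = num / g E"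
    unfolding prob_colour_def hprop num_def g_def by simp
  have rhs0: "0 \<le> (1 / real q) * (1 + 4 / t)" using tpos by simp
  show ?thesis
  proof (cases "g E = 0")
    case True
    then show ?thesis using pr rhs0 by simp
  next
    case False
    then have gpos: "0 < g E" by (simp add: g_def)
    have tt: "0 < 1 - 1/t" using t2 by simp
    have qpos: "0 < real q" using q1 by simp
    have "num * ((1 - 1/t) * real q) = (1 - 1/t) * (num * real q)" by (simp add: algebra_simps)
    also have "\<dots> \<le> (1 - 1/t) * g E2" using numle tt by (intro mult_left_mono) auto
    also have "\<dots> \<le> g E" by (rule claim)
    finally have "num * ((1 - 1/t) * real q) \<le> g E" .
    then have "num / g E \<le> 1 / ((1 - 1/t) * real q)"
      using gpos tt qpos by (simp add: divide_simps mult.commute)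
    also have "1 / ((1 - 1/t) * real q) \<le> (1 / real q) * (1 + 4 / t)"
    proof -
      have e1: "(1 - 1/t) * (1 + 4/t) = 1 + (3*t - 4) / (t*t)" using tpos by (simp add: field_simps)
      have "0 \<le> (3*t - 4) / (t*t)" using t2 by simp
      then have "1 \<le> (1 - 1/t) * (1 + 4/t)" using e1 by simp
      then have "1 / (1 - 1/t) \<le> 1 + 4/t" using tt by (simp add: divide_le_eq mult.commute)
      then have h: "1 / (1 - 1/t) / real q \<le> (1 + 4/t) / real q"
        by (rule divide_right_mono) (use qpos in simp)
      have "1 / ((1 - 1/t) * real q) = 1 / (1 - 1/t) / real q" by (simp only: divide_divide_eq_left)
      also have "\<dots> \<le> (1 + 4/t) / real q" by (rule h)
      also have "\<dots> = (1 / real q) * (1 + 4 / t)" by simp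
      finally show ?thesis .
    qed
    finally show ?thesis using pr by simp
  qed
qed

end
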